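(* Consider multiclass data $(x,y)$ with $x\in\mathcal{X}\subseteq\mathbb{R}^d$ drawn from a fixed distribution and labels $y\in\{1,\dots,k\}$, where $k\ge2$. A binary decision tree is grown top-down from a single root leaf. At each step $t=1,2,\dots$, the leaf $m$ of largest weight is split into two children using a hypothesis $h_m:\mathcal{X}\to\{-1,1\}$: $h_m(x)=1$ sends $x$ to the right child and $h_m(x)=-1$ sends it to the left child. After $t$ steps the tree has $t$ internal nodes. Assume the Weak Hypothesis Assumption holds with parameter $\gamma$: there is $\gamma>0$ such that for every split node $m$, \[ \gamma\le\min(\beta_m,1-\beta_m)\quad\text{and}\quad \tfrac12 J(h_m)=\sum_{i=1}^k\pi_{m,i}\,|P_{m,i}-\beta_m|\ge\gamma . \] Then for any $\alpha\in[0,2(1-\frac1k)]$, the Gini-entropy after $t$ splits satisfies $G_t^g\le\alpha$ whenever \[ t\ \ge\ \left(\frac{2(1-\frac1k)}{\alpha}\right)^{\frac{2(1-\gamma)^2}{\gamma^2\log_2 e}(k-1)}. \]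
   Context: For a node $m$, $w_m$ is the probability that $x$ reaches $m$. $\pi_{m,i}$ is the probability that $x$ has label $i$ given that it reaches $m$. $\beta_m=P(h_m(x)>0)$ and $P_{m,i}=P(h_m(x)>0\mid i)$, both computed for $x$ conditioned on reaching $m$ (the latter also conditioned on label $i$). Thus \[ J(h_m)=2\sum_i\pi_{m,i}\,|\beta_m-P_{m,i}|. \] For the tree after $t$ splits with leaf set $\mathcal{L}$, \[ G_t^g=\sum_{l\in\mathcal{L}}w_l\sum_{i=1}^k\pi_{l,i}(1-\pi_{l,i}). \] *)

theory Defs
  imports "HOL-Probability.Probability"
begin

text \<open>A tree node is identified with its region R (the set of inputs x that reach it).
  Conditional probabilities are ratios; when the conditioning event has probability 0
  the ratio is 0 (Isabelle convention x/0 = 0).\<close>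

definition node_weight :: "('x \<times> nat) measure \<Rightarrow> 'x set \<Rightarrow> real" where
  "node_weight M R = measure M {z \<in> space M. fst z \<in> R}"

definition node_pi :: "('x \<times> nat) measure \<Rightarrow> 'x set \<Rightarrow> nat \<Rightarrow> real" where
  "node_pi M R i = measure M {z \<in> space M. fst z \<in> R \<and> snd z = i} / node_weight M R"

definition node_beta :: "('x \<times> nat) measure \<Rightarrow> 'x set \<Rightarrow> ('x \<Rightarrow> int) \<Rightarrow> real" where
  "node_beta M R h = measure M {z \<in> space M. fst z \<in> R \<and> h (fst z) > 0} / node_weight M R"

definition node_P :: "('x \<times> nat) measure \<Rightarrow> 'x set \<Rightarrow> ('x \<Rightarrow> int) \<Rightarrow> nat \<Rightarrow> real" where
  "node_P M R h i =
     measure M {z \<in> space M. fst z \<in> R \<and> h (fst z) > 0 \<and> snd z = i}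
     / measure M {z \<in> space M. fst z \<in> R \<and> snd z = i}"

definition split_J :: "('x \<times> nat) measure \<Rightarrow> nat \<Rightarrow> 'x set \<Rightarrow> ('x \<Rightarrow> int) \<Rightarrow> real" where
  "split_J M k R h = 2 * (\<Sum>i\<in>{1..k}. node_pi M R i * \<bar>node_beta M R h - node_P M R h i\<bar>)"

definition gini_entropy :: "('x \<times> nat) measure \<Rightarrow> nat \<Rightarrow> 'x set list \<Rightarrow> real" where
  "gini_entropy M k L =
     sum_list (map (\<lambda>l. node_weight M l * (\<Sum>i\<in>{1..k}. node_pi M l i * (1 - node_pi M l i))) L)"

definition split_leaf :: "'x set list \<Rightarrow> nat \<Rightarrow> ('x \<Rightarrow> int) \<Rightarrow> 'x set list" where
  "split_leaf L j h = take j L @ drop (Suc j) L @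
     [L ! j \<inter> {x. h x = -1}, L ! j \<inter> {x. h x = 1}]"

end

theory Submission
  imports Defs
begin

lemma core:
  fixes b c :: "nat \<Rightarrow> real" and w1 w2 \<gamma> :: real and k :: nat
  assumes w1: "w1 > 0" and w2: "w2 > 0" and k: "k > 0"
    and nb: "\<And>i. b i \<ge> 0" and nc: "\<And>i. c i \<ge> 0" and g: "\<gamma> \<ge> 0"
    and J: "\<gamma> \<le> (\<Sum>i\<in>{1..k}. ((b i + c i)/(w1+w2)) * \<bar>w2/(w1+w2) - c i/(b i + c i)\<bar>)"
  shows "4*\<gamma>\<^sup>2*(w1+w2)/k \<le> ((\<Sum>i\<in>{1..k}. b i + c i) - (\<Sum>i\<in>{1..k}. (b i + c i)\<^sup>2)/(w1+w2))
      - ((\<Sum>i\<in>{1..k}. b i) - (\<Sum>i\<in>{1..k}. (b i)\<^sup>2)/w1) - ((\<Sum>i\<in>{1..k}. c i) - (\<Sum>i\<in>{1..k}. (c i)\<^sup>2)/w2)"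
proof -
  define w where "w = w1 + w2"
  define d where "d i = \<bar>b i * w2 - c i * w1\<bar>" for i
  have wp: "w > 0" using w1 w2 w_def by simp
  have t1: "((b i + c i)/w) * \<bar>w2/w - c i/(b i + c i)\<bar> = d i / w\<^sup>2" for i
  proof (cases "b i + c i = 0")
    case True
    then have "b i = 0" "c i = 0" using nb[of i] nc[of i] by auto
    then show ?thesis by (simp add: d_def)
  next
    case False
    then have ap: "b i + c i > 0" using nb[of i] nc[of i] by linarith
    have "w2/w - c i/(b i + c i) = (w2 * (b i + c i) - c i * w) / (w * (b i + c i))"
      using ap wp by (simp add: field_simps)
    also have "w2 * (b i + c i) - c i * w = b i * w2 - c i * w1" by (simp add: w_def algebra_simps)
    finally have "\<bar>w2/w - c i/(b i + c i)\<bar> = d i / (w * (b i + c i))"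
      using ap wp by (simp add: d_def abs_divide abs_mult)
    moreover have "(a/w)*(e/(w*a)) = e/w\<^sup>2" if "a > 0" for a e
      using that wp by (simp add: power2_eq_square)
    ultimately show ?thesis using ap by simp
  qed
  have "\<gamma> \<le> (\<Sum>i\<in>{1..k}. d i) / w\<^sup>2"
    using J t1 unfolding w_def[symmetric] by (simp add: sum_divide_distrib)
  then have gd: "\<gamma> * w\<^sup>2 \<le> (\<Sum>i\<in>{1..k}. d i)" using wp by (simp add: field_simps)
  have "(\<gamma> * w\<^sup>2)\<^sup>2 \<le> (\<Sum>i\<in>{1..k}. d i)\<^sup>2"
    using gd g wp by (intro power_mono) auto
  also have "\<dots> \<le> (\<Sum>i\<in>{1..k}. (d i)\<^sup>2) * k"
    using sum_squared_le_sum_of_squares[of d "{1..k}"] by simp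
  finally have cs: "\<gamma>\<^sup>2 * w^4 / k \<le> (\<Sum>i\<in>{1..k}. (d i)\<^sup>2)"
    using k by (simp add: field_simps power_mult_distrib flip: power_mult)
  have t2: "(b i)\<^sup>2/w1 + (c i)\<^sup>2/w2 - (b i + c i)\<^sup>2/w = (d i)\<^sup>2/(w1*w2*w)" for i
    using w1 w2 wp unfolding d_def w_def
    by (simp add: field_simps power2_eq_square)
  have "((\<Sum>i\<in>{1..k}. b i + c i) - (\<Sum>i\<in>{1..k}. (b i + c i)\<^sup>2)/w)
      - ((\<Sum>i\<in>{1..k}. b i) - (\<Sum>i\<in>{1..k}. (b i)\<^sup>2)/w1) - ((\<Sum>i\<in>{1..k}. c i) - (\<Sum>i\<in>{1..k}. (c i)\<^sup>2)/w2)
     = (\<Sum>i\<in>{1..k}. (b i)\<^sup>2/w1 + (c i)\<^sup>2/w2 - (b i + c i)\<^sup>2/w)"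
    by (simp add: sum.distrib sum_subtractf sum_divide_distrib)
  also have "\<dots> = (\<Sum>i\<in>{1..k}. (d i)\<^sup>2) / (w1*w2*w)"
    using t2 by (simp add: sum_divide_distrib)
  finally have eq: "((\<Sum>i\<in>{1..k}. b i + c i) - (\<Sum>i\<in>{1..k}. (b i + c i)\<^sup>2)/w)
      - ((\<Sum>i\<in>{1..k}. b i) - (\<Sum>i\<in>{1..k}. (b i)\<^sup>2)/w1) - ((\<Sum>i\<in>{1..k}. c i) - (\<Sum>i\<in>{1..k}. (c i)\<^sup>2)/w2)
     = (\<Sum>i\<in>{1..k}. (d i)\<^sup>2) / (w1*w2*w)" .
  have p: "w1*w2*w > 0" using w1 w2 wp by simp
  have "\<gamma>\<^sup>2 * w^4 / k / (w1*w2*w) \<le> (\<Sum>i\<in>{1..k}. (d i)\<^sup>2) / (w1*w2*w)"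
    using divide_right_mono[OF cs, of "w1*w2*w"] p by simp
  moreover have "4*\<gamma>\<^sup>2*w/k \<le> \<gamma>\<^sup>2 * w^4 / k / (w1*w2*w)"
  proof -
    have "0 \<le> (w1 - w2)\<^sup>2" by simp
    then have q: "4 * (w1*w2) \<le> w\<^sup>2" unfolding w_def
      by (simp add: power2_eq_square algebra_simps)
    have "4*\<gamma>\<^sup>2*w/k = (\<gamma>\<^sup>2 * w^3 / k) * 4 / w\<^sup>2" using wp by (simp add: field_simps power2_eq_square power3_eq_cube)
    also have "\<dots> \<le> (\<gamma>\<^sup>2 * w^3 / k) * 4 / (4*(w1*w2))"
      using q w1 w2 k wp by (intro divide_left_mono) auto
    also have "\<dots> = \<gamma>\<^sup>2 * w^4 / k / (w1*w2*w)" using w1 w2 wp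
      by (simp add: field_simps power2_eq_square power3_eq_cube power4_eq_xxxx)
    finally show ?thesis .
  qed
  ultimately show ?thesis using eq unfolding w_def by simp
qed


lemma split_meas:
  fixes h :: "'x \<Rightarrow> int"
  assumes P: "prob_space M" and AX: "AE z in M. fst z \<in> X" and hv: "\<And>x. x \<in> X \<Longrightarrow> h x \<in> {-1,1}"
    and A: "{z\<in>space M. fst z \<in> R \<and> Q z} \<in> sets M"
    and H1: "{z\<in>space M. h (fst z) = -1} \<in> sets M" and H2: "{z\<in>space M. h (fst z) = 1} \<in> sets M"
    and H3: "{z\<in>space M. h (fst z) > 0} \<in> sets M"
  shows "measure M {z\<in>space M. fst z \<in> R \<and> Q z} =
           measure M {z\<in>space M. fst z \<in> R \<inter> {x. h x = -1} \<and> Q z}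
         + measure M {z\<in>space M. fst z \<in> R \<inter> {x. h x = 1} \<and> Q z}"
    and "measure M {z\<in>space M. fst z \<in> R \<and> h (fst z) > 0 \<and> Q z} =
         measure M {z\<in>space M. fst z \<in> R \<inter> {x. h x = 1} \<and> Q z}"
proof -
  interpret prob_space M by (rule P)
  define A where "A = {z\<in>space M. fst z \<in> R \<and> Q z}"
  define B1 where "B1 = {z\<in>space M. fst z \<in> R \<inter> {x. h x = -1} \<and> Q z}"
  define B2 where "B2 = {z\<in>space M. fst z \<in> R \<inter> {x. h x = 1} \<and> Q z}"
  define B3 where "B3 = {z\<in>space M. fst z \<in> R \<and> h (fst z) > 0 \<and> Q z}"
  have e1: "B1 = A \<inter> {z\<in>space M. h (fst z) = -1}" unfolding A_def B1_def by auto
  have e2: "B2 = A \<inter> {z\<in>space M. h (fst z) = 1}" unfolding A_def B2_def by auto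
  have e3: "B3 = A \<inter> {z\<in>space M. h (fst z) > 0}" unfolding A_def B3_def by auto
  have sA: "A \<in> sets M" using A A_def by simp
  have s1: "B1 \<in> sets M" using e1 sA H1 by auto
  have s2: "B2 \<in> sets M" using e2 sA H2 by auto
  have s3: "B3 \<in> sets M" using e3 sA H3 by auto
  have "AE z in M. z \<in> A \<longleftrightarrow> z \<in> B1 \<union> B2"
    using AX AE_space
  proof eventually_elim
    case (elim z)
    then have "h (fst z) = -1 \<or> h (fst z) = 1" using hv by auto
    then show ?case unfolding A_def B1_def B2_def using elim by auto
  qed
  then have "measure M A = measure M (B1 \<union> B2)"
    using sA s1 s2 by (intro finite_measure_eq_AE) auto
  also have "\<dots> = measure M B1 + measure M B2"
    using s1 s2 by (intro finite_measure_Union) (auto simp: B1_def B2_def)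
  finally show "measure M {z\<in>space M. fst z \<in> R \<and> Q z} =
           measure M {z\<in>space M. fst z \<in> R \<inter> {x. h x = -1} \<and> Q z}
         + measure M {z\<in>space M. fst z \<in> R \<inter> {x. h x = 1} \<and> Q z}"
    unfolding A_def B1_def B2_def .
  have "AE z in M. z \<in> B3 \<longleftrightarrow> z \<in> B2"
    using AX AE_space
  proof eventually_elim
    case (elim z)
    then have "h (fst z) = -1 \<or> h (fst z) = 1" using hv by auto
    then show ?case unfolding B3_def B2_def using elim by auto
  qed
  then have "measure M B3 = measure M B2"
    using s3 s2 by (intro finite_measure_eq_AE) auto
  then show "measure M {z\<in>space M. fst z \<in> R \<and> h (fst z) > 0 \<and> Q z} =
         measure M {z\<in>space M. fst z \<in> R \<inter> {x. h x = 1} \<and> Q z}"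
    unfolding B3_def B2_def .
qed

lemma contrib:
  assumes "node_weight M l > 0"
  shows "node_weight M l * (\<Sum>i\<in>{1..k}. node_pi M l i * (1 - node_pi M l i)) =
    (\<Sum>i\<in>{1..k}. measure M {z\<in>space M. fst z \<in> l \<and> snd z = i})
    - (\<Sum>i\<in>{1..k}. (measure M {z\<in>space M. fst z \<in> l \<and> snd z = i})\<^sup>2) / node_weight M l"
proof -
  have e: "w * ((a/w) * (1 - a/w)) = a - a\<^sup>2/w" if "w > 0" for w a :: real
    using that by (simp add: field_simps power2_eq_square)
  have "node_weight M l * (\<Sum>i\<in>{1..k}. node_pi M l i * (1 - node_pi M l i)) =
    (\<Sum>i\<in>{1..k}. measure M {z\<in>space M. fst z \<in> l \<and> snd z = i}
    - (measure M {z\<in>space M. fst z \<in> l \<and> snd z = i})\<^sup>2 / node_weight M l)"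
    unfolding node_pi_def sum_distrib_left by (rule sum.cong) (simp_all only: e[OF assms])
  then show ?thesis by (simp add: sum_subtractf sum_divide_distrib)
qed

lemma sum_split:
  fixes f :: "'a set \<Rightarrow> real"
  assumes "j < length L"
  shows "sum_list (map f (split_leaf L j h)) =
     sum_list (map f L) - f (L!j) + f (L!j \<inter> {x. h x = -1}) + f (L!j \<inter> {x. h x = 1})"
proof -
  have "sum_list (map f L) = sum_list (map f (take j L @ L!j # drop (Suc j) L))"
    by (simp only: id_take_nth_drop[OF assms, symmetric])
  then show ?thesis unfolding split_leaf_def by simp
qed

lemma sum_list_le_len:
  fixes f :: "'a \<Rightarrow> real" and m :: real
  assumes "\<And>l. l \<in> set L \<Longrightarrow> f l \<le> m"
  shows "sum_list (map f L) \<le> length L * m"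
  using assms
proof (induction L)
  case (Cons a L)
  then have "f a \<le> m" "sum_list (map f L) \<le> length L * m" by auto
  then show ?case by (simp add: algebra_simps)
qed simp


lemma final_ineq:
  fixes k :: nat and \<gamma> \<alpha> :: real and t :: nat
  assumes k2: "k \<ge> 2" and g0: "0 < \<gamma>" and g1: "\<gamma> \<le> 1/2" and a0: "0 < \<alpha>"
    and a1: "\<alpha> \<le> 2 * (1 - 1 / real k)"
    and t_large: "real t \<ge> (2 * (1 - 1 / real k) / \<alpha>) powr
        (2 * (1 - \<gamma>)\<^sup>2 / (\<gamma>\<^sup>2 * log 2 (exp 1)) * (real k - 1))"
  shows "(1 - 1/real k) - 4*\<gamma>\<^sup>2/real k * ln (real t + 1) \<le> \<alpha>"
proof -
  define q where "q = 1 - 1/real k"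
  have kp: "real k > 0" using k2 by simp
  have q0: "q > 0" unfolding q_def using k2 by (simp add: field_simps)
  have qk: "q = (real k - 1) / real k" unfolding q_def using kp by (simp add: field_simps)
  define B where "B = 2 * q / \<alpha>"
  define E where "E = 2 * (1 - \<gamma>)\<^sup>2 / (\<gamma>\<^sup>2 * log 2 (exp 1)) * (real k - 1)"
  have B0: "B > 0" unfolding B_def using q0 a0 by simp
  have tB: "real t \<ge> B powr E" using t_large unfolding B_def E_def q_def .
  have tp: "real t > 0" proof -
    have "B powr E > 0" using B0 by simp
    then show ?thesis using tB by linarith
  qed
  have lnt: "E * ln B \<le> ln (real t + 1)"
  proof -
    have "E * ln B = ln (B powr E)" using B0 by (simp add: ln_powr)
    also have "\<dots> \<le> ln (real t)" using tB B0 tp by (subst ln_le_cancel_iff) auto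
    also have "\<dots> \<le> ln (real t + 1)" using tp by simp
    finally show ?thesis .
  qed
  have l2: "log 2 (exp 1) = 1 / ln 2" by (simp add: log_def)
  have Ee: "E = 2 * (1 - \<gamma>)\<^sup>2 * ln 2 * (real k - 1) / \<gamma>\<^sup>2"
    unfolding E_def l2 by (simp add: field_simps)
  have ln2: "ln (2::real) \<ge> 2/3" by (rule ln2_ge_two_thirds)
  have ln0: "ln (real t + 1) \<ge> 0" by simp
  show ?thesis
  proof (cases "\<alpha> \<ge> q")
    case True
    have "4*\<gamma>\<^sup>2/real k * ln (real t + 1) \<ge> 0" using kp ln0 by simp
    then show ?thesis using True unfolding q_def by linarith
  next
    case False
    then have aq: "\<alpha> < q" by simp
    have lqa: "ln (q/\<alpha>) \<ge> 1 - \<alpha>/q"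
    proof -
      have "ln (\<alpha>/q) \<le> \<alpha>/q - 1" using a0 q0 by (intro ln_le_minus_one) simp
      moreover have "ln (q/\<alpha>) = - ln (\<alpha>/q)" using a0 q0 by (simp add: ln_div)
      ultimately show ?thesis by simp
    qed
    have lB: "ln B \<ge> 1 - \<alpha>/q"
    proof -
      have "ln B = ln 2 + ln (q/\<alpha>)" unfolding B_def using a0 q0
        by (simp add: ln_mult ln_div)
      then show ?thesis using lqa ln2 by simp
    qed
    have "\<alpha>/q < 1" using aq q0 by simp
    then have lB0: "ln B \<ge> 0" using lB by linarith
    have g4: "(1 - \<gamma>)\<^sup>2 \<ge> 1/4"
    proof -
      have "1/2 \<le> 1 - \<gamma>" using g1 by simp
      then have "(1/2)\<^sup>2 \<le> (1 - \<gamma>)\<^sup>2" by (intro power_mono) auto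
      then show ?thesis by (simp add: power2_eq_square)
    qed
    have "4*\<gamma>\<^sup>2/real k * (E * ln B) = 8 * q * (1 - \<gamma>)\<^sup>2 * ln 2 * ln B"
      unfolding Ee qk using g0 kp by (simp add: field_simps power2_eq_square)
    also have "\<dots> \<ge> 8 * q * (1/4) * (2/3) * ln B"
      using g4 ln2 q0 lB0 by (intro mult_right_mono mult_mono mult_left_mono) auto
    finally have "4*\<gamma>\<^sup>2/real k * (E * ln B) \<ge> (4/3) * q * ln B" by simp
    moreover have "(4/3) * q * ln B \<ge> (4/3) * (q - \<alpha>)"
    proof -
      have "q * ln B \<ge> q * (1 - \<alpha>/q)" using lB q0 by (intro mult_left_mono) auto
      also have "q * (1 - \<alpha>/q) = q - \<alpha>" using q0 by (simp add: field_simps)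
      finally show ?thesis by simp
    qed
    moreover have "4*\<gamma>\<^sup>2/real k * (E * ln B) \<le> 4*\<gamma>\<^sup>2/real k * ln (real t + 1)"
      using lnt kp by (intro mult_left_mono) auto
    ultimately have X: "(4/3) * (q - \<alpha>) \<le> 4*\<gamma>\<^sup>2/real k * ln (real t + 1)" by linarith
    have "q - \<alpha> \<le> (4/3) * (q - \<alpha>)" using aq by simp
    with X have "q - \<alpha> \<le> 4*\<gamma>\<^sup>2/real k * ln (real t + 1)" by linarith
    then have "q - 4*\<gamma>\<^sup>2/real k * ln (real t + 1) \<le> \<alpha>" by linarith
    then show ?thesis unfolding q_def .
  qed
qed

theorem theorem2:
  fixes M :: "((real ^ ('d::finite)) \<times> nat) measure"
    and X :: "(real ^ 'd) set"
    and k :: nat and \<gamma> \<alpha> :: real and t :: nat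
    and Ls :: "nat \<Rightarrow> (real ^ 'd) set list"
    and sel :: "nat \<Rightarrow> nat"
    and hyp :: "nat \<Rightarrow> real ^ 'd \<Rightarrow> int"
  assumes M: "prob_space M"
    and sets_M: "sets M = sets (borel \<Otimes>\<^sub>M count_space UNIV)"
    and X_supp: "AE z in M. fst z \<in> X"
    and labels: "AE z in M. snd z \<in> {1..k}"
    and k2: "k \<ge> 2"
    and gamma_pos: "\<gamma> > 0"
    and root: "Ls 0 = [UNIV]"
    and sel_valid: "\<And>s. s < t \<Longrightarrow> sel s < length (Ls s)"
    and sel_largest: "\<And>s l. s < t \<Longrightarrow> l \<in> set (Ls s) \<Longrightarrow>
                         node_weight M l \<le> node_weight M (Ls s ! sel s)"
    and hyp_meas: "\<And>s. s < t \<Longrightarrow> hyp s \<in> borel_measurable borel"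
    and hyp_vals: "\<And>s x. s < t \<Longrightarrow> x \<in> X \<Longrightarrow> hyp s x \<in> {-1, 1}"
    and WHA_beta: "\<And>s. s < t \<Longrightarrow>
        \<gamma> \<le> min (node_beta M (Ls s ! sel s) (hyp s)) (1 - node_beta M (Ls s ! sel s) (hyp s))"
    and WHA_J: "\<And>s. s < t \<Longrightarrow> split_J M k (Ls s ! sel s) (hyp s) / 2 \<ge> \<gamma>"
    and step: "\<And>s. s < t \<Longrightarrow> Ls (Suc s) = split_leaf (Ls s) (sel s) (hyp s)"
    and alpha_pos: "0 < \<alpha>"
    and alpha_le: "\<alpha> \<le> 2 * (1 - 1 / real k)"
    and t_large: "real t \<ge> (2 * (1 - 1 / real k) / \<alpha>) powr
        (2 * (1 - \<gamma>)\<^sup>2 / (\<gamma>\<^sup>2 * log 2 (exp 1)) * (real k - 1))"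
  shows "gini_entropy M k (Ls t) \<le> \<alpha>"
proof -
  interpret P: prob_space M by (rule M)
  have fstm: "fst \<in> measurable M borel"
    by (subst measurable_cong_sets[OF sets_M refl]) simp
  have sndm: "snd \<in> measurable M (count_space UNIV)"
    by (subst measurable_cong_sets[OF sets_M refl]) simp
  have setR: "{z\<in>space M. fst z \<in> R} \<in> sets M" if "R \<in> sets borel" for R
  proof -
    have "{z\<in>space M. fst z \<in> R} = fst -` R \<inter> space M" by auto
    then show ?thesis using measurable_sets[OF fstm that] by simp
  qed
  have setS: "{z\<in>space M. snd z = i} \<in> sets M" for i
  proof -
    have "{z\<in>space M. snd z = i} = snd -` {i} \<inter> space M" by auto
    then show ?thesis using measurable_sets[OF sndm, of "{i}"] by simp
  qed
  have setRi: "{z\<in>space M. fst z \<in> R \<and> snd z = i} \<in> sets M" if "R \<in> sets borel" for R i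
  proof -
    have "{z\<in>space M. fst z \<in> R \<and> snd z = i} = {z\<in>space M. fst z \<in> R} \<inter> {z\<in>space M. snd z = i}"
      by auto
    then show ?thesis using setR[OF that] setS[of i] by auto
  qed
  have hb1: "{x. hyp s x = -1} \<in> sets borel" if "s < t" for s
  proof -
    have "{x. hyp s x = -1} = hyp s -` {-1} \<inter> space borel" by auto
    then show ?thesis using measurable_sets[OF hyp_meas[OF that], of "{-1}"] by simp
  qed
  have hb2: "{x. hyp s x = 1} \<in> sets borel" if "s < t" for s
  proof -
    have "{x. hyp s x = 1} = hyp s -` {1} \<inter> space borel" by auto
    then show ?thesis using measurable_sets[OF hyp_meas[OF that], of "{1}"] by simp
  qed
  have hb3: "{x. hyp s x > 0} \<in> sets borel" if "s < t" for s
  proof -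
    have "{x. hyp s x > 0} = hyp s -` {0<..} \<inter> space borel" by auto
    then show ?thesis using measurable_sets[OF hyp_meas[OF that], of "{0<..}"] by simp
  qed
  define f where "f l = node_weight M l * (\<Sum>i\<in>{1..k}. node_pi M l i * (1 - node_pi M l i))" for l
  have gini_f: "gini_entropy M k L = sum_list (map f L)" for L
    unfolding gini_entropy_def f_def by simp
  have kp: "real k > 0" using k2 by simp
  have inv: "s \<le> t \<Longrightarrow> length (Ls s) = Suc s \<and> (\<forall>l\<in>set (Ls s). l \<in> sets borel) \<and>
      sum_list (map (node_weight M) (Ls s)) = 1 \<and>
      gini_entropy M k (Ls s) \<le> gini_entropy M k (Ls 0) - 4*\<gamma>\<^sup>2/real k * harm s" for s
  proof (induction s)
    case 0
    have "node_weight M UNIV = 1" unfolding node_weight_def using P.prob_space by simp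
    then show ?case using root by (simp add: harm_def)
  next
    case (Suc s)
    then have st: "s < t" by simp
    with Suc.IH have len: "length (Ls s) = Suc s" and lb: "\<forall>l\<in>set (Ls s). l \<in> sets borel"
      and W: "sum_list (map (node_weight M) (Ls s)) = 1"
      and G: "gini_entropy M k (Ls s) \<le> gini_entropy M k (Ls 0) - 4*\<gamma>\<^sup>2/real k * harm s" by auto
    define L where "L = Ls s"
    define j where "j = sel s"
    define h where "h = hyp s"
    define R where "R = L ! j"
    define R1 where "R1 = R \<inter> {x. h x = -1}"
    define R2 where "R2 = R \<inter> {x. h x = 1}"
    have jl: "j < length L" unfolding j_def L_def using sel_valid[OF st] .
    have Rb: "R \<in> sets borel" unfolding R_def L_def using lb jl L_def by auto
    have R1b: "R1 \<in> sets borel" unfolding R1_def h_def using Rb hb1[OF st] by auto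
    have R2b: "R2 \<in> sets borel" unfolding R2_def h_def using Rb hb2[OF st] by auto
    have hv: "\<And>x. x \<in> X \<Longrightarrow> h x \<in> {-1,1}" unfolding h_def using hyp_vals[OF st] .
    have H1: "{z\<in>space M. h (fst z) = -1} \<in> sets M"
      using setR[OF hb1[OF st]] unfolding h_def by simp
    have H2: "{z\<in>space M. h (fst z) = 1} \<in> sets M"
      using setR[OF hb2[OF st]] unfolding h_def by simp
    have H3: "{z\<in>space M. h (fst z) > 0} \<in> sets M"
      using setR[OF hb3[OF st]] unfolding h_def by simp
    note SP = split_meas[OF M X_supp hv _ H1 H2 H3]
    define w where "w = node_weight M R"
    define w1 where "w1 = node_weight M R1"
    define w2 where "w2 = node_weight M R2"
    define a where "a i = measure M {z\<in>space M. fst z \<in> R \<and> snd z = i}" for i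
    define b where "b i = measure M {z\<in>space M. fst z \<in> R1 \<and> snd z = i}" for i
    define c where "c i = measure M {z\<in>space M. fst z \<in> R2 \<and> snd z = i}" for i
    have wsp: "w = w1 + w2"
      using SP(1)[of R "\<lambda>_. True"] setR[OF Rb]
      unfolding w_def w1_def w2_def node_weight_def R1_def R2_def by simp
    have asp: "a i = b i + c i" for i
      using SP(1)[of R "\<lambda>z. snd z = i"] setRi[OF Rb]
      unfolding a_def b_def c_def R1_def R2_def by simp
    have beta: "node_beta M R h = w2 / w"
      using SP(2)[of R "\<lambda>_. True"] setR[OF Rb]
      unfolding node_beta_def w_def w2_def node_weight_def R2_def by simp
    have Pi: "node_P M R h i = c i / (b i + c i)" for i
      using SP(2)[of R "\<lambda>z. snd z = i"] setRi[OF Rb] asp[of i]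
      unfolding node_P_def a_def c_def R2_def by simp
    have pii: "node_pi M R i = (b i + c i) / (w1 + w2)" for i
      unfolding node_pi_def using asp[of i] wsp unfolding a_def w_def by simp
    have nb: "b i \<ge> 0" for i unfolding b_def by simp
    have nc: "c i \<ge> 0" for i unfolding c_def by simp
    have w0: "w \<ge> 0" unfolding w_def node_weight_def by simp
    have w20: "w2 \<ge> 0" unfolding w2_def node_weight_def by simp
    have g1: "\<gamma> \<le> w2 / w" and g2: "\<gamma> \<le> 1 - w2 / w"
      using WHA_beta[OF st] beta unfolding h_def L_def j_def R_def by auto
    have wp: "w > 0"
    proof (rule ccontr)
      assume "\<not> w > 0"
      then have "w = 0" using w0 by simp
      then show False using g1 gamma_pos by simp
    qed
    have w2p: "w2 > 0"
    proof (rule ccontr)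
      assume "\<not> w2 > 0"
      then have "w2 = 0" using w20 by simp
      then show False using g1 gamma_pos by simp
    qed
    have "w2 / w < 1" using g2 gamma_pos by simp
    then have "w2 < w" using wp by simp
    then have w1p: "w1 > 0" using wsp by simp
    have J: "\<gamma> \<le> (\<Sum>i\<in>{1..k}. ((b i + c i)/(w1+w2)) * \<bar>w2/(w1+w2) - c i/(b i + c i)\<bar>)"
    proof -
      have "\<gamma> \<le> split_J M k R h / 2" using WHA_J[OF st] unfolding h_def R_def L_def j_def .
      also have "\<dots> = (\<Sum>i\<in>{1..k}. node_pi M R i * \<bar>node_beta M R h - node_P M R h i\<bar>)"
        unfolding split_J_def by simp
      finally show ?thesis unfolding beta Pi pii wsp .
    qed
    have dec0: "4*\<gamma>\<^sup>2*(w1+w2)/k \<le> ((\<Sum>i\<in>{1..k}. b i + c i) - (\<Sum>i\<in>{1..k}. (b i + c i)\<^sup>2)/(w1+w2))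
      - ((\<Sum>i\<in>{1..k}. b i) - (\<Sum>i\<in>{1..k}. (b i)\<^sup>2)/w1) - ((\<Sum>i\<in>{1..k}. c i) - (\<Sum>i\<in>{1..k}. (c i)\<^sup>2)/w2)"
      using k2 gamma_pos by (intro core[OF w1p w2p _ nb nc _ J]) auto
    have fR: "f R = (\<Sum>i\<in>{1..k}. b i + c i) - (\<Sum>i\<in>{1..k}. (b i + c i)\<^sup>2)/(w1+w2)"
      unfolding f_def using contrib[of M R k] wp wsp unfolding w_def a_def[symmetric] asp by simp
    have fR1: "f R1 = (\<Sum>i\<in>{1..k}. b i) - (\<Sum>i\<in>{1..k}. (b i)\<^sup>2)/w1"
      unfolding f_def using contrib[of M R1 k] w1p unfolding w1_def b_def[symmetric] by simp
    have fR2: "f R2 = (\<Sum>i\<in>{1..k}. c i) - (\<Sum>i\<in>{1..k}. (c i)\<^sup>2)/w2"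
      unfolding f_def using contrib[of M R2 k] w2p unfolding w2_def c_def[symmetric] by simp
    have dec: "4*\<gamma>\<^sup>2*w/k \<le> f R - f R1 - f R2" using dec0 fR fR1 fR2 wsp by simp
    have LS: "Ls (Suc s) = split_leaf L j h" unfolding L_def j_def h_def using step[OF st] .
    have gnew: "gini_entropy M k (Ls (Suc s)) = gini_entropy M k L - f R + f R1 + f R2"
      unfolding LS gini_f sum_split[OF jl] R_def R1_def R2_def ..
    have Wnew: "sum_list (map (node_weight M) (Ls (Suc s))) = 1"
      unfolding LS sum_split[OF jl] using W wsp unfolding L_def[symmetric] w_def w1_def w2_def R1_def R2_def R_def
      by simp
    have lennew: "length (Ls (Suc s)) = Suc (Suc s)" unfolding LS split_leaf_def using len jl L_def by simp
    have setnew: "\<forall>l\<in>set (Ls (Suc s)). l \<in> sets borel"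
    proof
      fix l assume "l \<in> set (Ls (Suc s))"
      then have "l \<in> set L \<or> l = R1 \<or> l = R2"
        unfolding LS split_leaf_def R1_def R2_def R_def
        using set_take_subset[of j L] set_drop_subset[of "Suc j" L] by auto
      then show "l \<in> sets borel" using lb R1b R2b L_def by auto
    qed
    have wbig: "1 \<le> real (Suc s) * w"
    proof -
      have "sum_list (map (node_weight M) L) \<le> length L * w"
        using sel_largest[OF st] unfolding w_def R_def L_def j_def
        by (intro sum_list_le_len) auto
      then show ?thesis using W len L_def by simp
    qed
    have "4*\<gamma>\<^sup>2/real k * inverse (real (Suc s)) \<le> 4*\<gamma>\<^sup>2/real k * w"
    proof (rule mult_left_mono)
      show "inverse (real (Suc s)) \<le> w" using wbig by (simp add: field_simps)
    qed (use kp in simp)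
    then have "4*\<gamma>\<^sup>2/real k * inverse (real (Suc s)) \<le> 4*\<gamma>\<^sup>2*w/k" by simp
    then have "gini_entropy M k (Ls (Suc s)) \<le> gini_entropy M k (Ls 0) - 4*\<gamma>\<^sup>2/real k * harm (Suc s)"
    proof -
      have "4*\<gamma>\<^sup>2/real k * harm (Suc s) = 4*\<gamma>\<^sup>2/real k * harm s + 4*\<gamma>\<^sup>2/real k * inverse (real (Suc s))"
        by (simp add: harm_Suc distrib_left)
      moreover have "gini_entropy M k L = gini_entropy M k (Ls s)" using L_def by simp
      ultimately show ?thesis using G dec gnew \<open>4*\<gamma>\<^sup>2/real k * inverse (real (Suc s)) \<le> 4*\<gamma>\<^sup>2*w/k\<close>
        by linarith
    qed
    then show ?case using Wnew lennew setnew by simp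
  qed
  define B where "B = 2 * (1 - 1 / real k) / \<alpha>"
  have B0: "B > 0" unfolding B_def using k2 alpha_pos by (simp add: field_simps)
  have tpos: "0 < t"
  proof (rule ccontr)
    assume "\<not> 0 < t"
    then have "t = 0" by simp
    moreover have "B powr (2 * (1 - \<gamma>)\<^sup>2 / (\<gamma>\<^sup>2 * log 2 (exp 1)) * (real k - 1)) > 0"
      using B0 by simp
    ultimately show False using t_large unfolding B_def by simp
  qed
  have g12: "\<gamma> \<le> 1/2" using WHA_beta[OF tpos] by simp
  have G0: "gini_entropy M k (Ls 0) \<le> 1 - 1/real k"
  proof -
    define a where "a i = measure M {z\<in>space M. fst z \<in> UNIV \<and> snd z = i}" for i
    have nw: "node_weight M UNIV = 1" unfolding node_weight_def using P.prob_space by simp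
    have "gini_entropy M k (Ls 0) = f UNIV" using root gini_f by simp
    also have "\<dots> = (\<Sum>i\<in>{1..k}. a i) - (\<Sum>i\<in>{1..k}. (a i)\<^sup>2)"
      unfolding f_def using contrib[of M UNIV k] nw unfolding a_def by simp
    finally have ge: "gini_entropy M k (Ls 0) = (\<Sum>i\<in>{1..k}. a i) - (\<Sum>i\<in>{1..k}. (a i)\<^sup>2)" .
    define S where "S = (\<Sum>i\<in>{1..k}. a i)"
    have S0: "S \<ge> 0" unfolding S_def a_def by (simp add: sum_nonneg)
    have "S = measure M (\<Union>i\<in>{1..k}. {z\<in>space M. fst z \<in> UNIV \<and> snd z = i})"
      unfolding S_def a_def
      by (rule P.finite_measure_finite_Union[symmetric])
         (auto simp: disjoint_family_on_def intro: setS)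
    also have "\<dots> \<le> 1" by (rule P.prob_le_1)
    finally have S1: "S \<le> 1" .
    have "S\<^sup>2 \<le> (\<Sum>i\<in>{1..k}. (a i)\<^sup>2) * real k"
      unfolding S_def using sum_squared_le_sum_of_squares[of a "{1..k}"] by simp
    then have sq: "S\<^sup>2 / real k \<le> (\<Sum>i\<in>{1..k}. (a i)\<^sup>2)" using kp by (simp add: field_simps)
    have "0 \<le> (1 - S) * (real k - 1 - S)" using S1 k2 by (intro mult_nonneg_nonneg) auto
    moreover have "(1 - 1/real k) - (S - S\<^sup>2 / real k) = (1 - S) * (real k - 1 - S) / real k"
      using kp by (simp add: field_simps power2_eq_square)
    ultimately have "S - S\<^sup>2 / real k \<le> 1 - 1/real k"
      using divide_nonneg_pos[of "(1 - S) * (real k - 1 - S)" "real k"] kp by linarith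
    then show ?thesis using ge sq unfolding S_def by linarith
  qed
  have It: "gini_entropy M k (Ls t) \<le> gini_entropy M k (Ls 0) - 4*\<gamma>\<^sup>2/real k * harm t"
    using inv[of t] by simp
  have "4*\<gamma>\<^sup>2/real k * ln (real t + 1) \<le> 4*\<gamma>\<^sup>2/real k * harm t"
    using kp by (intro mult_left_mono ln_le_harm) auto
  moreover have "(1 - 1/real k) - 4*\<gamma>\<^sup>2/real k * ln (real t + 1) \<le> \<alpha>"
    by (rule final_ineq[OF k2 gamma_pos g12 alpha_pos alpha_le t_large])
  ultimately show ?thesis using It G0 by linarith
qed

end
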